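(* Let $\Delta=(\Gamma,\mathbf{R})$ be a theory such that $\bigcirc(B/A)\in\mathbf{R}^{\mathrm{o}}$, there is no $r\in\mathbf{R}^{\mathrm{o}}$ with $r\triangleright\bigcirc(B/A)$, and $\Diamond(A\wedge B)\in\Gamma$, where $A,B$ are Boolean formulas. Then $\Delta\mid\sim\bigcirc(B/A)$.
   Context: Boolean formulas over propositional letters; $\models_{\mathrm{PL}}$ classical entailment, $\models_{\mathrm{S5}}$ S5 entailment; $\Diamond A=\neg\Box\neg A$ and $w\models\Box A$ iff $A$ holds at all worlds. A theory is $\Delta=(\Gamma,\mathbf{R})$, $\Gamma$ a finite set of Boolean or alethic formulas, $\mathbf{R}=(\mathbf{R}^{\Rightarrow},\mathbf{R}^{\mathrm{o}})$, $\mathbf{R}^{\Rightarrow}$ a finite (coherent) set of normality conditionals and $\mathbf{R}^{\mathrm{o}}$ a finite set of obligations $\bigcirc(B/A)$ (body $b=A$, head $h=B$). Overriding (relative to $\Gamma$): $r_j\triangleright r_i$ iff (i) $\{h(r_i),h(r_j)\}\cup\Gamma\models_{\mathrm{S5}}\bot$; (ii) $b(r_j)\models_{\mathrm{PL}}b(r_i)$ and $b(r_i)\not\models_{\mathrm{PL}}b(r_j)$; (iii) $\{h(r_i),b(r_j)\}\not\models_{\mathrm{PL}}\bot$. An $\mathbf{R}$-ordered model is $(W,\succeq_N,\succeq_I,v)$ with $W\neq\emptyset$, valuation $v$, $\succeq_N$ the normality total preorder determined by $\mathbf{R}^{\Rightarrow}$ via the lexicographic ranking on falsified conditionals (coherence: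 no nonempty $X\subseteq\mathbf{R}^{\Rightarrow}$ has $\mathrm{m}(X)\models_{\mathrm{PL}}\bigwedge_{r\in X}\neg b(r)$, with $\mathrm{m}(X)=\{A\rightarrow B:A\Rightarrow B\in X\}$; $\mathcal{E}_0=\mathbf{R}^{\Rightarrow}$, $\mathcal{E}_{i+1}=\{A\Rightarrow B\in\mathbf{R}^{\Rightarrow}:\mathrm{m}(\mathcal{E}_i)\models_{\mathrm{PL}}\neg A\}$, $m$ the stabilization index, $\Delta_i=\mathcal{E}_i\setminus\mathcal{E}_{i+1}$, $\Delta_m=\mathcal{E}_m$; $w_1\succeq_N w_2$ iff $\langle|\Delta_{m-1}\cap F(w_1)|,\dots,|\Delta_0\cap F(w_1)|\rangle$ is lexicographically $\le$ that of $w_2$, where $F(w)$ is the set of conditionals in $\mathbf{R}^{\Rightarrow}$ whose body holds and head fails at $w$), and $w_1\succeq_I w_2$ iff $V(w_1)\subseteq V(w_2)$ where $V(w)=\{r_i\in\mathbf{R}^{\mathrm{o}}:w\models b(r_i)\wedge\neg h(r_i)$ and $w\not\models b(r_j)$ for all $r_j\in\mathbf{R}^{\mathrm{o}}$ with $r_j\triangleright r_i\}$. $\max_{\succeq}(X)=\{w\in X:\forall u\in X(u\succeq w\Rightarrow w\succeq u)\}$. Lifting: $U\succeq_I^{s}U'$ iff for every $u'\in U'$ there is $u\in U$ with $u\succeq_I u'$. Truth: $w\models\bigcirc(B/A)$ iff $\max_{\succeq_N}(\Vert A\wedge\neg B\Vert)\not\succeq_I^{s}\max_{\succeq_N}(\Vert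 A\wedge B\Vert)$. $\Delta\mid\sim\varphi$ iff in every $\mathbf{R}$-ordered model every world satisfying all of $\Gamma$ satisfies $\varphi$. *)

theory Defs
  imports Main
begin

datatype 'p form =
    Atom 'p
  | Bot
  | Neg "'p form"
  | Conj "'p form" "'p form"
  | Disj "'p form" "'p form"
  | Impl "'p form" "'p form"
  | Box "'p form"

definition Dia :: "'p form \<Rightarrow> 'p form" where
  "Dia A = Neg (Box (Neg A))"

fun boolean :: "'p form \<Rightarrow> bool" where
  "boolean (Atom p) = True"
| "boolean Bot = True"
| "boolean (Neg A) = boolean A"
| "boolean (Conj A B) = (boolean A \<and> boolean B)"
| "boolean (Disj A B) = (boolean A \<and> boolean B)"
| "boolean (Impl A B) = (boolean A \<and> boolean B)"
| "boolean (Box A) = False"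

text \<open>Truth at a world w of a model with world set W and valuation v
  (universal accessibility, i.e. S5).\<close>
fun msat :: "'w set \<Rightarrow> ('w \<Rightarrow> 'p \<Rightarrow> bool) \<Rightarrow> 'w \<Rightarrow> 'p form \<Rightarrow> bool" where
  "msat W v w (Atom p) = v w p"
| "msat W v w Bot = False"
| "msat W v w (Neg A) = (\<not> msat W v w A)"
| "msat W v w (Conj A B) = (msat W v w A \<and> msat W v w B)"
| "msat W v w (Disj A B) = (msat W v w A \<or> msat W v w B)"
| "msat W v w (Impl A B) = (msat W v w A \<longrightarrow> msat W v w B)"
| "msat W v w (Box A) = (\<forall>u\<in>W. msat W v u A)"

text \<open>Classical evaluation (only meaningful for Boolean formulas).\<close>
fun bval :: "('p \<Rightarrow> bool) \<Rightarrow> 'p form \<Rightarrow> bool" where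
  "bval val (Atom p) = val p"
| "bval val Bot = False"
| "bval val (Neg A) = (\<not> bval val A)"
| "bval val (Conj A B) = (bval val A \<and> bval val B)"
| "bval val (Disj A B) = (bval val A \<or> bval val B)"
| "bval val (Impl A B) = (bval val A \<longrightarrow> bval val B)"
| "bval val (Box A) = bval val A"

definition pl_ent :: "'p form set \<Rightarrow> 'p form \<Rightarrow> bool" where
  "pl_ent X \<phi> = (\<forall>val. (\<forall>\<psi>\<in>X. bval val \<psi>) \<longrightarrow> bval val \<phi>)"

text \<open>S5 entailment, with S5 models given as sets of valuations (worlds are valuations).\<close>
definition s5_ent :: "'p form set \<Rightarrow> 'p form \<Rightarrow> bool" where
  "s5_ent X \<phi> = (\<forall>(W :: ('p \<Rightarrow> bool) set) w. w \<in> W \<longrightarrow>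
      (\<forall>\<psi>\<in>X. msat W (\<lambda>u. u) w \<psi>) \<longrightarrow> msat W (\<lambda>u. u) w \<phi>)"

section \<open>Rules: a normality conditional A \<Rightarrow> B and an obligation O(B/A) are both
  represented as the pair (A, B) = (body, head).\<close>

type_synonym 'p rule = "'p form \<times> 'p form"

abbreviation body :: "'p rule \<Rightarrow> 'p form" where "body r \<equiv> fst r"
abbreviation head :: "'p rule \<Rightarrow> 'p form" where "head r \<equiv> snd r"

definition mat :: "'p rule set \<Rightarrow> 'p form set" where
  "mat X = (\<lambda>r. Impl (body r) (head r)) ` X"

definition coherent :: "'p rule set \<Rightarrow> bool" where
  "coherent Rn = (\<not> (\<exists>X. X \<subseteq> Rn \<and> X \<noteq> {} \<and>
       (\<forall>val. (\<forall>\<psi>\<in>mat X. bval val \<psi>) \<longrightarrow> (\<forall>r\<in>X. bval val (Neg (body r))))))"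

text \<open>Overriding relative to \<Gamma>: overrides \<Gamma> rj ri means rj \<triangleright> ri.\<close>
definition overrides :: "'p form set \<Rightarrow> 'p rule \<Rightarrow> 'p rule \<Rightarrow> bool" where
  "overrides \<Gamma> rj ri =
     (s5_ent ({head ri, head rj} \<union> \<Gamma>) Bot
      \<and> pl_ent {body rj} (body ri) \<and> \<not> pl_ent {body ri} (body rj)
      \<and> \<not> pl_ent {head ri, body rj} Bot)"

primrec Eseq :: "'p rule set \<Rightarrow> nat \<Rightarrow> 'p rule set" where
  "Eseq Rn 0 = Rn"
| "Eseq Rn (Suc i) = {r \<in> Rn. pl_ent (mat (Eseq Rn i)) (Neg (body r))}"

definition stab :: "'p rule set \<Rightarrow> nat" where
  "stab Rn = (LEAST i. Eseq Rn (Suc i) = Eseq Rn i)"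

definition Dlt :: "'p rule set \<Rightarrow> nat \<Rightarrow> 'p rule set" where
  "Dlt Rn i = (if i < stab Rn then Eseq Rn i - Eseq Rn (Suc i) else Eseq Rn (stab Rn))"

definition falsified :: "'p rule set \<Rightarrow> 'w set \<Rightarrow> ('w \<Rightarrow> 'p \<Rightarrow> bool) \<Rightarrow> 'w \<Rightarrow> 'p rule set" where
  "falsified Rn W v w = {r \<in> Rn. msat W v w (body r) \<and> \<not> msat W v w (head r)}"

definition rank_vec :: "'p rule set \<Rightarrow> 'w set \<Rightarrow> ('w \<Rightarrow> 'p \<Rightarrow> bool) \<Rightarrow> 'w \<Rightarrow> nat list" where
  "rank_vec Rn W v w = map (\<lambda>i. card (Dlt Rn i \<inter> falsified Rn W v w)) (rev [0..<stab Rn])"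

definition lex_le :: "nat list \<Rightarrow> nat list \<Rightarrow> bool" where
  "lex_le xs ys = (xs = ys \<or> (\<exists>k. k < length xs \<and> k < length ys \<and>
                     take k xs = take k ys \<and> xs ! k < ys ! k))"

definition norm_ge :: "'p rule set \<Rightarrow> 'w set \<Rightarrow> ('w \<Rightarrow> 'p \<Rightarrow> bool) \<Rightarrow> 'w \<Rightarrow> 'w \<Rightarrow> bool" where
  "norm_ge Rn W v w1 w2 = lex_le (rank_vec Rn W v w1) (rank_vec Rn W v w2)"

definition viol :: "'p form set \<Rightarrow> 'p rule set \<Rightarrow> 'w set \<Rightarrow> ('w \<Rightarrow> 'p \<Rightarrow> bool) \<Rightarrow> 'w \<Rightarrow> 'p rule set" where
  "viol \<Gamma> Ro W v w = {ri \<in> Ro. msat W v w (body ri) \<and> \<not> msat W v w (head ri) \<and>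
      (\<forall>rj\<in>Ro. overrides \<Gamma> rj ri \<longrightarrow> \<not> msat W v w (body rj))}"

definition ideal_ge :: "'p form set \<Rightarrow> 'p rule set \<Rightarrow> 'w set \<Rightarrow> ('w \<Rightarrow> 'p \<Rightarrow> bool) \<Rightarrow> 'w \<Rightarrow> 'w \<Rightarrow> bool" where
  "ideal_ge \<Gamma> Ro W v w1 w2 = (viol \<Gamma> Ro W v w1 \<subseteq> viol \<Gamma> Ro W v w2)"

definition maxs :: "('w \<Rightarrow> 'w \<Rightarrow> bool) \<Rightarrow> 'w set \<Rightarrow> 'w set" where
  "maxs ge X = {w \<in> X. \<forall>u\<in>X. ge u w \<longrightarrow> ge w u}"

definition lift :: "('w \<Rightarrow> 'w \<Rightarrow> bool) \<Rightarrow> 'w set \<Rightarrow> 'w set \<Rightarrow> bool" where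
  "lift ge U U' = (\<forall>u'\<in>U'. \<exists>u\<in>U. ge u u')"

definition ext :: "'w set \<Rightarrow> ('w \<Rightarrow> 'p \<Rightarrow> bool) \<Rightarrow> 'p form \<Rightarrow> 'w set" where
  "ext W v \<phi> = {w \<in> W. msat W v w \<phi>}"

text \<open>Obl B A stands for O(B/A).\<close>
datatype 'p dform = Fm "'p form" | Obl "'p form" "'p form"

fun dsat :: "'p form set \<Rightarrow> 'p rule set \<Rightarrow> 'p rule set \<Rightarrow> 'w set \<Rightarrow> ('w \<Rightarrow> 'p \<Rightarrow> bool)
              \<Rightarrow> 'w \<Rightarrow> 'p dform \<Rightarrow> bool" where
  "dsat \<Gamma> Rn Ro W v w (Fm \<phi>) = msat W v w \<phi>"
| "dsat \<Gamma> Rn Ro W v w (Obl B A) =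
     (\<not> lift (ideal_ge \<Gamma> Ro W v)
            (maxs (norm_ge Rn W v) (ext W v (Conj A (Neg B))))
            (maxs (norm_ge Rn W v) (ext W v (Conj A B))))"

text \<open>Delta |~ phi, relative to R-ordered models whose worlds have type 'w
  (the theorem is stated for an arbitrary world type).\<close>
definition nm_conseq :: "'w itself \<Rightarrow> 'p form set \<Rightarrow> 'p rule set \<Rightarrow> 'p rule set \<Rightarrow> 'p dform \<Rightarrow> bool" where
  "nm_conseq _ \<Gamma> Rn Ro \<phi> = (\<forall>(W :: 'w set) (v :: 'w \<Rightarrow> 'p \<Rightarrow> bool). W \<noteq> {} \<longrightarrow>
      (\<forall>w\<in>W. (\<forall>\<gamma>\<in>\<Gamma>. msat W v w \<gamma>) \<longrightarrow> dsat \<Gamma> Rn Ro W v w \<phi>))"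

end

theory Submission
  imports Defs "HOL-Library.List_Lexorder"
begin

lemma rank_vec_finite:
  assumes "finite Rn"
  shows "finite (rank_vec Rn W v ` X)"
proof -
  have "rank_vec Rn W v ` X \<subseteq> {xs. set xs \<subseteq> {0..card Rn} \<and> length xs = stab Rn}"
  proof
    fix xs assume "xs \<in> rank_vec Rn W v ` X"
    then obtain w where xs: "xs = rank_vec Rn W v w" by blast
    have "\<And>i. card (Dlt Rn i \<inter> falsified Rn W v w) \<le> card Rn"
      by (rule card_mono[OF assms]) (auto simp: falsified_def)
    then show "xs \<in> {xs. set xs \<subseteq> {0..card Rn} \<and> length xs = stab Rn}"
      unfolding xs rank_vec_def by auto
  qed
  moreover have "finite {xs. set xs \<subseteq> {0..card Rn} \<and> length xs = stab Rn}"
    by (rule finite_lists_length_eq) simp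
  ultimately show ?thesis by (rule finite_subset)
qed

lemma maxs_nonempty:
  assumes "finite Rn" and "x \<in> X"
  shows "\<exists>w. w \<in> maxs (norm_ge Rn W v) X"
proof -
  let ?S = "rank_vec Rn W v ` X"
  have fin: "finite ?S" by (rule rank_vec_finite[OF assms(1)])
  have ne: "?S \<noteq> {}" using assms(2) by blast
  have "Min ?S \<in> ?S" using fin ne by (rule Min_in)
  then obtain w where w: "w \<in> X" "rank_vec Rn W v w = Min ?S" by auto
  have "\<forall>u\<in>X. norm_ge Rn W v w u"
  proof
    fix u assume u: "u \<in> X"
    have le: "rank_vec Rn W v w \<le> rank_vec Rn W v u"
      using w(2) fin u by simp
    have len: "length (rank_vec Rn W v w) = length (rank_vec Rn W v u)"
      by (simp add: rank_vec_def)
    show "norm_ge Rn W v w u"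
    proof (cases "rank_vec Rn W v w = rank_vec Rn W v u")
      case True then show ?thesis by (simp add: norm_ge_def lex_le_def)
    next
      case False
      with le have "(rank_vec Rn W v w, rank_vec Rn W v u) \<in> lexord {(a, b). a < b}"
        by (simp add: list_le_def list_less_def)
      then obtain i where i: "i < length (rank_vec Rn W v w)"
          "take i (rank_vec Rn W v w) = take i (rank_vec Rn W v u)"
          "rank_vec Rn W v w ! i < rank_vec Rn W v u ! i"
      proof -
        have "(\<exists>i. i < min (length (rank_vec Rn W v w)) (length (rank_vec Rn W v u)) \<and>
           take i (rank_vec Rn W v w) = take i (rank_vec Rn W v u) \<and>
           (rank_vec Rn W v w ! i, rank_vec Rn W v u ! i) \<in> {(a, b). a < b})"
          using lexord_take_index_conv[THEN iffD1, OF \<open>(rank_vec Rn W v w, rank_vec Rn W v u) \<in> lexord {(a, b). a < b}\<close>] len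
          by simp
        then show ?thesis using that by auto
      qed
      show ?thesis unfolding norm_ge_def lex_le_def
        apply (rule disjI2)
        apply (rule exI[of _ i])
        using i len by simp
    qed
  qed
  then have "w \<in> maxs (norm_ge Rn W v) X" using w(1) by (simp add: maxs_def)
  then show ?thesis by blast
qed

theorem proposition7:
  fixes \<Gamma> :: "'p form set" and Rn Ro :: "'p rule set" and A B :: "'p form"
  assumes "finite \<Gamma>" and "finite Rn" and "finite Ro"
    and "coherent Rn"
    and "\<forall>r\<in>Rn. boolean (body r) \<and> boolean (head r)"
    and "\<forall>r\<in>Ro. boolean (body r) \<and> boolean (head r)"
    and "boolean A" and "boolean B"
    and "(A, B) \<in> Ro"
    and "\<not> (\<exists>r\<in>Ro. overrides \<Gamma> r (A, B))"
    and "Dia (Conj A B) \<in> \<Gamma>"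
  shows "nm_conseq TYPE('w) \<Gamma> Rn Ro (Obl B A)"
  unfolding nm_conseq_def
proof (intro allI impI ballI)
  fix W :: "'w set" and v w
  assume "W \<noteq> {}" and "w \<in> W" and G: "\<forall>\<gamma>\<in>\<Gamma>. msat W v w \<gamma>"
  then have "msat W v w (Dia (Conj A B))" using assms(11) by blast
  then obtain x where "x \<in> W" "msat W v x A" "msat W v x B" by (auto simp: Dia_def)
  then have xe: "x \<in> ext W v (Conj A B)" by (simp add: ext_def)
  obtain u' where u': "u' \<in> maxs (norm_ge Rn W v) (ext W v (Conj A B))"
    using maxs_nonempty[OF assms(2) xe] by blast
  have u'B: "msat W v u' B" using u' by (simp add: maxs_def ext_def)
  have "\<not> ideal_ge \<Gamma> Ro W v u u'" if "u \<in> maxs (norm_ge Rn W v) (ext W v (Conj A (Neg B)))" for u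
  proof -
    have "msat W v u A" "\<not> msat W v u B" using that by (auto simp: maxs_def ext_def)
    then have "(A, B) \<in> viol \<Gamma> Ro W v u" using assms(9,10) by (auto simp: viol_def)
    moreover have "(A, B) \<notin> viol \<Gamma> Ro W v u'" using u'B by (simp add: viol_def)
    ultimately show ?thesis by (auto simp: ideal_ge_def)
  qed
  then have "\<not> lift (ideal_ge \<Gamma> Ro W v)
            (maxs (norm_ge Rn W v) (ext W v (Conj A (Neg B))))
            (maxs (norm_ge Rn W v) (ext W v (Conj A B)))"
    using u' unfolding lift_def by blast
  then show "dsat \<Gamma> Rn Ro W v w (Obl B A)" by simp
qed

end
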